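(* Let $k\ge 2$ and $n\ge 3$ be integers and $\ell\ge 0$. Let ${\sf S}^{(c)}_k(n,\ell)$ denote the number of circular $k$-noncrossing RNA structures on $\{1,\dots,n\}$ with exactly $\ell$ isolated vertices, ${\sf S}^{(c)}_k(n)=\sum_\ell {\sf S}^{(c)}_k(n,\ell)$, and $f_k(m,\ell)$ the number of $k$-noncrossing digraphs on $\{1,\dots,m\}$ with exactly $\ell$ isolated vertices ($f_k(m,\ell)=0$ if $\ell>m$). Then $$ {\sf S}^{(c)}_k(n,\ell)=\sum_{b=0}^{\lfloor (n-\ell)/2\rfloor}(-1)^b\left[\binom{(n-2)-(b-1)}{b-1}+\binom{n-b}{b}\right]f_k(n-2b,\ell), $$ and $$ {\sf S}^{(c)}_k(n)=\sum_{b=0}^{\lfloor n/2\rfloor}(-1)^b\left[\binom{(n-2)-(b-1)}{b-1}+\binom{n-b}{b}\right]\left\{\sum_{\ell=0}^{n-2b}f_k(n-2b,\ell)\right\}, $$ where $\binom{m}{-1}:=0$ and $\binom{m}{r}:=0$ if $0\le m<r$.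
   Context: A digraph on $\{1,\dots,n\}$ is a set of arcs $(i,j)$ with $1\le i<j\le n$. It is $k$-noncrossing if every vertex lies in at most one arc and there are no $k$ arcs $(i_1,j_1),\dots,(i_k,j_k)$ with $i_1<\dots<i_k<j_1<\dots<j_k$. A vertex is isolated if it lies in no arc. A circular $k$-noncrossing RNA structure on $\{1,\dots,n\}$ is a $k$-noncrossing digraph containing no arc of the form $(i,i+1)$, $1\le i\le n-1$, and no arc $(1,n)$ (i.e. no $1$-arc with indices taken modulo $n$). *)

theory Defs
  imports Main
begin

definition digraph :: "nat \<Rightarrow> (nat \<times> nat) set \<Rightarrow> bool" where
  "digraph n A \<longleftrightarrow> A \<subseteq> {(i, j). 1 \<le> i \<and> i < j \<and> j \<le> n}"

definition vertex_disjoint :: "(nat \<times> nat) set \<Rightarrow> bool" where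
  "vertex_disjoint A \<longleftrightarrow>
     (\<forall>a\<in>A. \<forall>b\<in>A. {fst a, snd a} \<inter> {fst b, snd b} \<noteq> {} \<longrightarrow> a = b)"

text \<open>A k-crossing: arcs s 0, ..., s (k-1) with i_1 < ... < i_k < j_1 < ... < j_k.\<close>
definition has_k_crossing :: "nat \<Rightarrow> (nat \<times> nat) set \<Rightarrow> bool" where
  "has_k_crossing k A \<longleftrightarrow>
     (\<exists>s :: nat \<Rightarrow> nat \<times> nat.
        (\<forall>t<k. s t \<in> A) \<and>
        (\<forall>t. t + 1 < k \<longrightarrow> fst (s t) < fst (s (t + 1)) \<and> snd (s t) < snd (s (t + 1))) \<and>
        fst (s (k - 1)) < snd (s 0))"

definition k_noncrossing :: "nat \<Rightarrow> nat \<Rightarrow> (nat \<times> nat) set \<Rightarrow> bool" where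
  "k_noncrossing k n A \<longleftrightarrow> digraph n A \<and> vertex_disjoint A \<and> \<not> has_k_crossing k A"

definition num_isolated :: "nat \<Rightarrow> (nat \<times> nat) set \<Rightarrow> nat" where
  "num_isolated n A = card {v \<in> {1..n}. \<forall>(i, j)\<in>A. v \<noteq> i \<and> v \<noteq> j}"

definition circular_rna :: "nat \<Rightarrow> nat \<Rightarrow> (nat \<times> nat) set \<Rightarrow> bool" where
  "circular_rna k n A \<longleftrightarrow> k_noncrossing k n A \<and>
     (\<forall>i. 1 \<le> i \<and> i + 1 \<le> n \<longrightarrow> (i, i + 1) \<notin> A) \<and> (1, n) \<notin> A"

definition f_k :: "nat \<Rightarrow> nat \<Rightarrow> nat \<Rightarrow> nat" where
  "f_k k m l = card {A. k_noncrossing k m A \<and> num_isolated m A = l}"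

definition S_circ :: "nat \<Rightarrow> nat \<Rightarrow> nat \<Rightarrow> nat" where
  "S_circ k n l = card {A. circular_rna k n A \<and> num_isolated n A = l}"

definition S_circ_total :: "nat \<Rightarrow> nat \<Rightarrow> nat" where
  "S_circ_total k n = (\<Sum>l\<le>n. S_circ k n l)"

text \<open>binom(m, r-1) with the convention binom(m,-1) = 0 (b = 0 case).\<close>
definition coef :: "nat \<Rightarrow> nat \<Rightarrow> int" where
  "coef n b = (-1) ^ b *
     (int (if b = 0 then 0 else ((n - 2) - (b - 1)) choose (b - 1)) + int ((n - b) choose b))"

end

theory Submission
  imports Defs
begin


lemma alt_pow: "finite X \<Longrightarrow> (\<Sum>T\<in>Pow X. (-1::int) ^ card T) = (if X = {} then 1 else 0)"
proof (cases "X = {}")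
  case False
  assume f: "finite X"
  have "{} \<subset> X" using False by auto
  from card_subsupersets_even_odd[OF f this]
  have "card {T. T \<in> Pow X \<and> even (card T)} = card {T. T \<in> Pow X \<and> odd (card T)}" by simp
  from sum_alternating_cancels[OF _ this] f False show ?thesis by simp
qed simp

definition verts :: "(nat \<times> nat) set \<Rightarrow> nat set" where
  "verts A = (\<Union>a\<in>A. {fst a, snd a})"

definition mapA :: "(nat \<Rightarrow> nat) \<Rightarrow> (nat \<times> nat) set \<Rightarrow> (nat \<times> nat) set" where
  "mapA h A = (\<lambda>(i,j). (h i, h j)) ` A"

lemma verts_mapA: "verts (mapA h A) = h ` verts A"
  unfolding verts_def mapA_def by force

lemma mapA_comp: assumes "\<And>x. x \<in> verts A \<Longrightarrow> g (h x) = x" shows "mapA g (mapA h A) = A"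
proof -
  have "mapA g (mapA h A) = (\<lambda>a. (g (h (fst a)), g (h (snd a)))) ` A"
    unfolding mapA_def image_image by (simp add: case_prod_beta)
  also have "\<dots> = id ` A"
  proof (rule image_cong[OF refl])
    fix a assume "a \<in> A"
    hence "fst a \<in> verts A" "snd a \<in> verts A" unfolding verts_def by auto
    thus "(g (h (fst a)), g (h (snd a))) = id a" using assms by simp
  qed
  finally show ?thesis by simp
qed

lemma num_isolated_alt: "num_isolated n A = card ({1..n} - verts A)"
proof -
  have "{v \<in> {1..n}. \<forall>(i, j)\<in>A. v \<noteq> i \<and> v \<noteq> j} = {1..n} - verts A"
    unfolding verts_def by force
  thus ?thesis unfolding num_isolated_def by simp
qed

lemma chain_lt:
  assumes "\<forall>t. t + 1 < k \<longrightarrow> (g::nat\<Rightarrow>nat) t < g (t + 1)" "t < t'" "t' < k"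
  shows "g t < g t'"
  using assms(2,3)
proof (induction t')
  case (Suc t')
  have "g t' < g (Suc t')" using assms(1) Suc.prems by auto
  moreover have "g t \<le> g t'"
  proof (cases "t < t'")
    case True with Suc show ?thesis by auto
  next
    case False then have "t = t'" using Suc.prems by simp
    thus ?thesis by simp
  qed
  ultimately show ?case by simp
qed simp

definition Ecirc :: "nat \<Rightarrow> (nat \<times> nat) set" where
  "Ecirc n = {(i, i+1) | i. 1 \<le> i \<and> i + 1 \<le> n} \<union> {(1,n)}"

lemma crossing_avoids_E:
  assumes k: "(k::nat) \<ge> 2" and dg: "digraph n A" and sA: "\<forall>t<k. s t \<in> A"
    and mono: "\<forall>t. t + 1 < k \<longrightarrow> fst (s t) < fst (s (t + 1)) \<and> snd (s t) < snd (s (t + 1))"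
    and last: "fst (s (k - 1)) < snd (s 0)" and t: "t < k"
  shows "s t \<notin> Ecirc n"
proof
  assume e: "s t \<in> Ecirc n"
  have m1: "\<forall>t. t + 1 < k \<longrightarrow> fst (s t) < fst (s (t + 1))" using mono by auto
  have m2: "\<forall>t. t + 1 < k \<longrightarrow> snd (s t) < snd (s (t + 1))" using mono by auto
  have f1: "\<And>a b. a < b \<Longrightarrow> b < k \<Longrightarrow> fst (s a) < fst (s b)" using chain_lt[of k "\<lambda>t. fst (s t)", OF m1] by blast
  have f2: "\<And>a b. a < b \<Longrightarrow> b < k \<Longrightarrow> snd (s a) < snd (s b)" using chain_lt[of k "\<lambda>t. snd (s t)", OF m2] by blast
  have inA: "\<And>a. a < k \<Longrightarrow> fst (s a) \<ge> 1 \<and> snd (s a) \<le> n" using sA dg unfolding digraph_def by force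
  show False
  proof (cases "t < k - 1")
    case True
    have a: "fst (s t) < fst (s (k-1))" using f1[OF True] k by auto
    have b: "snd (s 0) \<le> snd (s t)" using f2[of 0 t] t by (cases t) auto
    have c: "snd (s t) < snd (s (k-1))" using f2[OF True] k by auto
    from e show False unfolding Ecirc_def using a b c last inA[of "k-1"] k by auto
  next
    case False
    hence tk: "t = k - 1" using t by auto
    have a: "fst (s 0) < fst (s t)" using f1[of 0 t] tk k by auto
    have c: "snd (s 0) < snd (s t)" using f2[of 0 t] tk k by auto
    from e show False unfolding Ecirc_def using a c last inA[of 0] k tk by auto
  qed
qed



lemma digraph_iff: "digraph n A \<longleftrightarrow> (\<forall>a\<in>A. 1 \<le> fst a \<and> fst a < snd a \<and> snd a \<le> n)"
  unfolding digraph_def by auto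

lemma crossing_mono: "has_k_crossing k A \<Longrightarrow> A \<subseteq> A' \<Longrightarrow> has_k_crossing k A'"
  unfolding has_k_crossing_def by blast

lemma crossing_map:
  assumes k: "k \<ge> 1" and X: "verts A \<subseteq> X" and h: "\<forall>u\<in>X. \<forall>v\<in>X. u < v \<longrightarrow> h u < h v"
    and c: "has_k_crossing k A"
  shows "has_k_crossing k (mapA h A)"
proof -
  obtain s where sA: "\<forall>t<k. s t \<in> A"
    and mono: "\<forall>t. t + 1 < k \<longrightarrow> fst (s t) < fst (s (t + 1)) \<and> snd (s t) < snd (s (t + 1))"
    and last: "fst (s (k - 1)) < snd (s 0)"
    using c unfolding has_k_crossing_def by blast
  have ends: "\<And>t. t < k \<Longrightarrow> fst (s t) \<in> X \<and> snd (s t) \<in> X"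
    using sA X unfolding verts_def by blast
  define s' where "s' = (\<lambda>t. (h (fst (s t)), h (snd (s t))))"
  have "\<forall>t<k. s' t \<in> mapA h A"
  proof (intro allI impI)
    fix t assume "t < k"
    hence "s t \<in> A" using sA by auto
    thus "s' t \<in> mapA h A" unfolding s'_def mapA_def by (intro image_eqI[of _ _ "s t"]) (auto simp: case_prod_beta)
  qed
  moreover have "\<forall>t. t + 1 < k \<longrightarrow> fst (s' t) < fst (s' (t + 1)) \<and> snd (s' t) < snd (s' (t + 1))"
  proof (intro allI impI)
    fix t assume t: "t + 1 < k"
    then show "fst (s' t) < fst (s' (t + 1)) \<and> snd (s' t) < snd (s' (t + 1))"
      unfolding s'_def using mono ends[of t] ends[of "t+1"] h by simp
  qed
  moreover have "fst (s' (k - 1)) < snd (s' 0)"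
    unfolding s'_def using last ends[of "k-1"] ends[of 0] h k by simp
  ultimately show ?thesis unfolding has_k_crossing_def by blast
qed

lemma crossing_remove:
  assumes k: "(k::nat) \<ge> 2" and dg: "digraph n A" and B: "B \<subseteq> Ecirc n" and c: "has_k_crossing k A"
  shows "has_k_crossing k (A - B)"
proof -
  obtain s where sA: "\<forall>t<k. s t \<in> A"
    and mono: "\<forall>t. t + 1 < k \<longrightarrow> fst (s t) < fst (s (t + 1)) \<and> snd (s t) < snd (s (t + 1))"
    and last: "fst (s (k - 1)) < snd (s 0)"
    using c unfolding has_k_crossing_def by blast
  have "\<forall>t<k. s t \<in> A - B"
    using crossing_avoids_E[OF k dg sA mono last] sA B by blast
  thus ?thesis using mono last unfolding has_k_crossing_def by blast
qed

definition rank :: "nat set \<Rightarrow> nat \<Rightarrow> nat" where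
  "rank V v = card {u\<in>V. u \<le> v}"

lemma rank_mono: assumes "finite V" "u \<in> V" "v \<in> V" "u < v" shows "rank V u < rank V v"
proof -
  have "{w\<in>V. w \<le> u} \<subseteq> {w\<in>V. w \<le> v}" "v \<in> {w\<in>V. w \<le> v} - {w\<in>V. w \<le> u}" using assms by auto
  hence "{w\<in>V. w \<le> u} \<subset> {w\<in>V. w \<le> v}" by blast
  thus ?thesis unfolding rank_def by (rule psubset_card_mono[rotated]) (use assms in auto)
qed

lemma rank_bij: assumes "finite V" shows "bij_betw (rank V) V {1..card V}"
proof -
  have inj: "inj_on (rank V) V"
  proof (rule inj_onI)
    fix u v assume "u \<in> V" "v \<in> V" "rank V u = rank V v"
    thus "u = v" using rank_mono[OF assms, of u v] rank_mono[OF assms, of v u]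
      by (cases u v rule: linorder_cases) auto
  qed
  have sub: "rank V ` V \<subseteq> {1..card V}"
  proof
    fix x assume "x \<in> rank V ` V"
    then obtain v where v: "v \<in> V" "x = rank V v" by auto
    have "{u\<in>V. u \<le> v} \<noteq> {}" using v by auto
    hence "rank V v \<ge> 1" unfolding rank_def using assms
      by (simp add: Suc_le_eq card_gt_0_iff)
    moreover have "rank V v \<le> card V" unfolding rank_def using assms by (intro card_mono) auto
    ultimately show "x \<in> {1..card V}" using v by auto
  qed
  have "card (rank V ` V) = card {1..card V}" using card_image[OF inj] by simp
  hence "rank V ` V = {1..card V}" using card_subset_eq[OF _ sub] by simp
  thus ?thesis using inj unfolding bij_betw_def by simp
qed

lemma vd_map:
  assumes vd: "vertex_disjoint A" and X: "verts A \<subseteq> X" and inj: "inj_on h X"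
  shows "vertex_disjoint (mapA h A)"
  unfolding vertex_disjoint_def
proof (intro ballI impI)
  fix a' b' assume a': "a' \<in> mapA h A" and b': "b' \<in> mapA h A"
    and ne: "{fst a', snd a'} \<inter> {fst b', snd b'} \<noteq> {}"
  obtain a where a: "a \<in> A" "a' = (h (fst a), h (snd a))" using a' unfolding mapA_def by auto
  obtain b where b: "b \<in> A" "b' = (h (fst b), h (snd b))" using b' unfolding mapA_def by auto
  have inX: "fst a \<in> X" "snd a \<in> X" "fst b \<in> X" "snd b \<in> X"
    using a b X unfolding verts_def by auto
  have "{fst a, snd a} \<inter> {fst b, snd b} \<noteq> {}"
    using ne a b inX inj_onD[OF inj] by auto
  hence "a = b" using vd a b unfolding vertex_disjoint_def by blast
  thus "a' = b'" using a b by simp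
qed

lemma vd_union:
  assumes "vertex_disjoint A1" "vertex_disjoint A2" "verts A1 \<inter> verts A2 = {}"
  shows "vertex_disjoint (A1 \<union> A2)"
  using assms unfolding vertex_disjoint_def verts_def by blast

lemma digraph_map:
  assumes dg: "digraph n A" and X: "verts A \<subseteq> X" and h: "\<forall>u\<in>X. \<forall>v\<in>X. u < v \<longrightarrow> h u < h v"
    and r: "h ` X \<subseteq> {1..m}"
  shows "digraph m (mapA h A)"
  unfolding digraph_iff
proof
  fix a' assume "a' \<in> mapA h A"
  then obtain a where a: "a \<in> A" "a' = (h (fst a), h (snd a))" unfolding mapA_def by auto
  have inX: "fst a \<in> X" "snd a \<in> X" using a X unfolding verts_def by auto
  show "1 \<le> fst a' \<and> fst a' < snd a' \<and> snd a' \<le> m"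
    using a inX h r dg unfolding digraph_iff by fastforce
qed



lemma Ecirc_digraph: "n \<ge> 2 \<Longrightarrow> digraph n (Ecirc n)"
  unfolding digraph_def Ecirc_def by auto

lemma finite_Ecirc: "finite (Ecirc n)"
proof -
  have "Ecirc n \<subseteq> {0..n+1} \<times> {0..n+1}" unfolding Ecirc_def by auto
  thus ?thesis by (rule finite_subset) simp
qed

lemma verts_Un: "verts (X \<union> Y) = verts X \<union> verts Y"
  unfolding verts_def by auto

lemma card_verts:
  assumes dg: "digraph n B" and vd: "vertex_disjoint B" and fB: "finite B"
  shows "card (verts B) = 2 * card B"
proof -
  have "card (verts B) = (\<Sum>a\<in>B. card {fst a, snd a})"
    unfolding verts_def
  proof (rule card_UN_disjoint[OF fB])
    show "\<forall>i\<in>B. finite {fst i, snd i}" by simp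
    show "\<forall>i\<in>B. \<forall>j\<in>B. i \<noteq> j \<longrightarrow> {fst i, snd i} \<inter> {fst j, snd j} = {}"
      using vd unfolding vertex_disjoint_def by blast
  qed
  also have "\<dots> = (\<Sum>a\<in>B. 2)"
  proof (rule sum.cong[OF refl])
    fix a assume "a \<in> B"
    hence "fst a \<noteq> snd a" using dg unfolding digraph_iff by force
    thus "card {fst a, snd a} = 2" by simp
  qed
  finally show ?thesis by simp
qed

lemma count_fixed:
  assumes k: "(k::nat) \<ge> 2" and n: "n \<ge> 2" and BE: "B \<subseteq> Ecirc n" and vdB: "vertex_disjoint B"
  shows "card {A. k_noncrossing k n A \<and> num_isolated n A = l \<and> B \<subseteq> A} = f_k k (n - 2 * card B) l"
proof -
  define W where "W = verts B"
  define V where "V = {1..n} - W"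
  define m where "m = card V"
  define \<phi> where "\<phi> = rank V"
  define \<psi> where "\<psi> = the_inv_into V \<phi>"
  have fB: "finite B" using BE finite_Ecirc finite_subset by blast
  have dgB: "digraph n B" using BE Ecirc_digraph[OF n] unfolding digraph_def by blast
  have W1n: "W \<subseteq> {1..n}" using dgB unfolding W_def verts_def digraph_iff by auto
  have cW: "card W = 2 * card B" using card_verts dgB vdB fB W_def by simp
  have mval: "m = n - 2 * card B" unfolding m_def V_def
    using card_Diff_subset[OF finite_subset[OF W1n] W1n] cW by simp
  have fV: "finite V" unfolding V_def by simp
  have bij: "bij_betw \<phi> V {1..m}" unfolding \<phi>_def m_def by (rule rank_bij[OF fV])
  have \<phi>mono: "\<forall>u\<in>V. \<forall>v\<in>V. u < v \<longrightarrow> \<phi> u < \<phi> v" unfolding \<phi>_def using rank_mono[OF fV] by blast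
  have inj\<phi>: "inj_on \<phi> V" using bij_betw_imp_inj_on[OF bij] .
  have \<phi>V: "\<phi> ` V = {1..m}" using bij_betw_imp_surj_on[OF bij] .
  have \<psi>\<phi>: "\<And>v. v \<in> V \<Longrightarrow> \<psi> (\<phi> v) = v" unfolding \<psi>_def using the_inv_into_f_f[OF inj\<phi>] by blast
  have \<phi>\<psi>: "\<And>x. x \<in> {1..m} \<Longrightarrow> \<phi> (\<psi> x) = x" unfolding \<psi>_def using f_the_inv_into_f[OF inj\<phi>] \<phi>V by blast
  have \<psi>in: "\<And>x. x \<in> {1..m} \<Longrightarrow> \<psi> x \<in> V" unfolding \<psi>_def
    using the_inv_into_into[OF inj\<phi> _ subset_refl] \<phi>V by blast
  have \<psi>mono: "\<forall>u\<in>{1..m}. \<forall>v\<in>{1..m}. u < v \<longrightarrow> \<psi> u < \<psi> v"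
  proof (intro ballI impI)
    fix u v assume u: "u \<in> {1..m}" and v: "v \<in> {1..m}" and uv: "u < v"
    show "\<psi> u < \<psi> v"
    proof (rule ccontr)
      assume "\<not> \<psi> u < \<psi> v"
      hence "\<psi> v < \<psi> u \<or> \<psi> v = \<psi> u" by auto
      hence "\<phi> (\<psi> v) \<le> \<phi> (\<psi> u)" using \<phi>mono \<psi>in[OF u] \<psi>in[OF v] by fastforce
      thus False using \<phi>\<psi>[OF u] \<phi>\<psi>[OF v] uv by simp
    qed
  qed
  have inj\<psi>: "inj_on \<psi> {1..m}" using \<phi>\<psi> by (metis inj_onI)
  have \<psi>img: "\<psi> ` {1..m} = V"
  proof
    show "\<psi> ` {1..m} \<subseteq> V" using \<psi>in by blast
    show "V \<subseteq> \<psi> ` {1..m}"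
    proof
      fix v assume "v \<in> V"
      hence "\<phi> v \<in> {1..m}" "\<psi> (\<phi> v) = v" using \<phi>V \<psi>\<phi> by auto
      thus "v \<in> \<psi> ` {1..m}" by (metis image_eqI)
    qed
  qed
  have VW: "V \<inter> W = {}" unfolding V_def by auto
  define F where "F = (\<lambda>A. mapA \<phi> (A - B))"
  define G where "G = (\<lambda>A'. mapA \<psi> A' \<union> B)"
  define L where "L = {A. k_noncrossing k n A \<and> num_isolated n A = l \<and> B \<subseteq> A}"
  define R where "R = {A. k_noncrossing k m A \<and> num_isolated m A = l}"
  have L_verts: "verts (A - B) \<subseteq> V" if A: "A \<in> L" for A
  proof -
    from A have dg: "digraph n A" and vd: "vertex_disjoint A" and BA: "B \<subseteq> A"
      unfolding L_def k_noncrossing_def by auto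
    show "verts (A - B) \<subseteq> V"
    proof
      fix x assume "x \<in> verts (A - B)"
      then obtain a where a: "a \<in> A" "a \<notin> B" "x = fst a \<or> x = snd a" unfolding verts_def by auto
      have "x \<in> {1..n}" using dg a unfolding digraph_iff by force
      moreover have "x \<notin> W"
      proof
        assume "x \<in> W"
        then obtain b where b: "b \<in> B" "x = fst b \<or> x = snd b" unfolding W_def verts_def by auto
        have "{fst a, snd a} \<inter> {fst b, snd b} \<noteq> {}" using a b by auto
        hence "a = b" using vd a(1) b(1) BA unfolding vertex_disjoint_def by blast
        thus False using a b by auto
      qed
      ultimately show "x \<in> V" unfolding V_def by auto
    qed
  qed
  have \<psi>\<phi>AB: "mapA \<psi> (mapA \<phi> (A - B)) = A - B" if A: "A \<in> L" for A
    using mapA_comp[of "A - B" \<psi> \<phi>] L_verts[OF A] \<psi>\<phi> by blast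
  have GF: "G (F A) = A" if A: "A \<in> L" for A
    using \<psi>\<phi>AB[OF A] A unfolding G_def F_def L_def by auto
  have R_verts: "verts A' \<subseteq> {1..m}" if "A' \<in> R" for A'
    using that unfolding R_def k_noncrossing_def digraph_iff verts_def by force
  have \<psi>verts: "verts (mapA \<psi> A') \<subseteq> V" if A': "A' \<in> R" for A'
    unfolding verts_mapA using R_verts[OF A'] \<psi>in by blast
  have disjB: "mapA \<psi> A' \<inter> B = {}" if A': "A' \<in> R" for A'
  proof (rule ccontr)
    assume "mapA \<psi> A' \<inter> B \<noteq> {}"
    then obtain a where a: "a \<in> mapA \<psi> A'" "a \<in> B" by auto
    have "fst a \<in> verts (mapA \<psi> A')" "fst a \<in> W" using a unfolding verts_def W_def by auto
    thus False using \<psi>verts[OF A'] VW by blast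
  qed
  have GB: "G A' - B = mapA \<psi> A'" if A': "A' \<in> R" for A'
    using disjB[OF A'] unfolding G_def by auto
  have \<phi>\<psi>A: "mapA \<phi> (mapA \<psi> A') = A'" if A': "A' \<in> R" for A'
    using mapA_comp[of A' \<phi> \<psi>] R_verts[OF A'] \<phi>\<psi> by blast
  have FG: "F (G A') = A'" if A': "A' \<in> R" for A'
    unfolding F_def using GB[OF A'] \<phi>\<psi>A[OF A'] by simp
  have FL: "F A \<in> R" if A: "A \<in> L" for A
  proof -
    from A have dg: "digraph n A" and vd: "vertex_disjoint A" and nc: "\<not> has_k_crossing k A"
      and iso: "num_isolated n A = l" and BA: "B \<subseteq> A"
      unfolding L_def k_noncrossing_def by auto
    have dgAB: "digraph n (A - B)" using dg unfolding digraph_def by blast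
    have vdAB: "vertex_disjoint (A - B)" using vd unfolding vertex_disjoint_def by blast
    have vF: "verts (F A) \<subseteq> {1..m}" unfolding F_def verts_mapA using L_verts[OF A] \<phi>V by blast
    have "digraph m (F A)" unfolding F_def
      by (rule digraph_map[OF dgAB L_verts[OF A] \<phi>mono]) (use \<phi>V in auto)
    moreover have "vertex_disjoint (F A)" unfolding F_def by (rule vd_map[OF vdAB L_verts[OF A] inj\<phi>])
    moreover have "\<not> has_k_crossing k (F A)"
    proof
      assume "has_k_crossing k (F A)"
      hence "has_k_crossing k (mapA \<psi> (F A))"
        using crossing_map[of k "F A" "{1..m}" \<psi>] k vF \<psi>mono by auto
      hence "has_k_crossing k (A - B)" using \<psi>\<phi>AB[OF A] unfolding F_def by simp
      hence "has_k_crossing k A" by (rule crossing_mono) auto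
      thus False using nc by simp
    qed
    moreover have "num_isolated m (F A) = l"
    proof -
      have vA: "verts A = verts (A - B) \<union> W" unfolding W_def verts_def using BA by auto
      have e1: "{1..n} - verts A = V - verts (A - B)" unfolding vA V_def by auto
      have e2: "{1..m} - verts (F A) = \<phi> ` (V - verts (A - B))"
        unfolding F_def verts_mapA \<phi>V[symmetric]
        by (rule inj_on_image_set_diff[OF inj\<phi>, symmetric]) (use L_verts[OF A] in auto)
      have "card ({1..m} - verts (F A)) = card (V - verts (A - B))"
        unfolding e2 by (rule card_image) (rule inj_on_subset[OF inj\<phi>], auto)
      thus ?thesis using iso e1 unfolding num_isolated_alt by simp
    qed
    ultimately show "F A \<in> R" unfolding R_def k_noncrossing_def by auto
  qed
  have GR: "G A' \<in> L" if A': "A' \<in> R" for A'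
  proof -
    from A' have dg: "digraph m A'" and vd: "vertex_disjoint A'" and nc: "\<not> has_k_crossing k A'"
      and iso: "num_isolated m A' = l"
      unfolding R_def k_noncrossing_def by auto
    have dg\<psi>: "digraph n (mapA \<psi> A')"
      by (rule digraph_map[OF dg R_verts[OF A'] \<psi>mono]) (use \<psi>img V_def in auto)
    have dgG: "digraph n (G A')" using dg\<psi> dgB unfolding G_def digraph_def by blast
    have vdG: "vertex_disjoint (G A')" unfolding G_def
      by (rule vd_union[OF vd_map[OF vd R_verts[OF A'] inj\<psi>] vdB])
        (use \<psi>verts[OF A'] VW W_def in auto)
    have ncG: "\<not> has_k_crossing k (G A')"
    proof
      assume "has_k_crossing k (G A')"
      hence "has_k_crossing k (G A' - B)" by (rule crossing_remove[OF k dgG BE])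
      hence "has_k_crossing k (mapA \<psi> A')" using GB[OF A'] by simp
      hence "has_k_crossing k (mapA \<phi> (mapA \<psi> A'))"
        using crossing_map[of k "mapA \<psi> A'" V \<phi>] k \<psi>verts[OF A'] \<phi>mono by auto
      thus False using \<phi>\<psi>A[OF A'] nc by simp
    qed
    have isoG: "num_isolated n (G A') = l"
    proof -
      have vG: "verts (G A') = \<psi> ` verts A' \<union> W" unfolding G_def verts_Un verts_mapA W_def by simp
      have e1: "{1..n} - verts (G A') = \<psi> ` ({1..m} - verts A')"
      proof -
        have "{1..n} - verts (G A') = V - \<psi> ` verts A'" unfolding vG V_def by auto
        also have "\<dots> = \<psi> ` ({1..m} - verts A')"
          unfolding \<psi>img[symmetric]
          by (rule inj_on_image_set_diff[OF inj\<psi>, symmetric]) (use R_verts[OF A'] in auto)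
        finally show ?thesis .
      qed
      have "card ({1..n} - verts (G A')) = card ({1..m} - verts A')"
        unfolding e1 by (rule card_image) (rule inj_on_subset[OF inj\<psi>], auto)
      thus ?thesis using iso unfolding num_isolated_alt by simp
    qed
    show "G A' \<in> L" unfolding L_def k_noncrossing_def using dgG vdG ncG isoG unfolding G_def by auto
  qed
  have "bij_betw F L R" by (rule bij_betw_byWitness[where f'=G]) (use GF FG FL GR in auto)
  hence "card L = card R" by (rule bij_betw_same_card)
  thus ?thesis unfolding L_def R_def f_k_def mval by simp
qed



definition Ms :: "(nat \<times> nat) set \<Rightarrow> nat \<Rightarrow> (nat \<times> nat) set set" where
  "Ms X b = {B. B \<subseteq> X \<and> vertex_disjoint B \<and> card B = b}"

lemma vd_subset: "vertex_disjoint A \<Longrightarrow> B \<subseteq> A \<Longrightarrow> vertex_disjoint B"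
  unfolding vertex_disjoint_def by blast

lemma finite_Ms: "finite X \<Longrightarrow> finite (Ms X b)"
  unfolding Ms_def by (rule finite_subset[of _ "Pow X"]) auto

lemma card_Ms_empty: "card (Ms {} b) = (if b = 0 then 1 else 0)"
proof -
  have "Ms {} b = (if b = 0 then {{}} else {})" unfolding Ms_def vertex_disjoint_def by auto
  thus ?thesis by simp
qed

lemma split_edge:
  assumes fX: "finite X" and eX: "e \<notin> X"
  shows "card (Ms (insert e X) b) = card (Ms X b)
     + (if b = 0 then 0 else card (Ms {x\<in>X. {fst x, snd x} \<inter> {fst e, snd e} = {}} (b - 1)))"
proof -
  define Y where "Y = {x\<in>X. {fst x, snd x} \<inter> {fst e, snd e} = {}}"
  define S2 where "S2 = {B \<in> Ms (insert e X) b. e \<in> B}"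
  have un: "Ms (insert e X) b = Ms X b \<union> S2"
    unfolding S2_def Ms_def using eX by blast
  have dj: "Ms X b \<inter> S2 = {}" unfolding S2_def Ms_def using eX by blast
  have f1: "finite (Ms X b)" using finite_Ms[OF fX] .
  have f2: "finite S2" unfolding S2_def using finite_Ms[of "insert e X" b] fX by auto
  have c: "card (Ms (insert e X) b) = card (Ms X b) + card S2"
    unfolding un by (rule card_Un_disjoint[OF f1 f2 dj])
  have "card S2 = (if b = 0 then 0 else card (Ms Y (b - 1)))"
  proof (cases "b = 0")
    case True
    have "S2 = {}"
    proof (rule ccontr)
      assume "S2 \<noteq> {}"
      then obtain B where B: "B \<subseteq> insert e X" "card B = 0" "e \<in> B" unfolding S2_def Ms_def True by auto
      have "finite B" using B(1) fX finite_subset by auto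
      thus False using B by simp
    qed
    thus ?thesis using True by simp
  next
    case False
    have fY: "Y \<subseteq> X" unfolding Y_def by auto
    have eq: "S2 = insert e ` Ms Y (b - 1)"
    proof
      show "S2 \<subseteq> insert e ` Ms Y (b - 1)"
      proof
        fix B assume "B \<in> S2"
        hence B: "B \<subseteq> insert e X" "vertex_disjoint B" "card B = b" "e \<in> B"
          unfolding S2_def Ms_def by auto
        have fB: "finite B" using B(1) fX finite_subset by auto
        have "B - {e} \<subseteq> Y"
        proof
          fix x assume x: "x \<in> B - {e}"
          hence "x \<in> X" using B(1) by auto
          moreover have "{fst x, snd x} \<inter> {fst e, snd e} = {}"
            using B(2,4) x unfolding vertex_disjoint_def by blast
          ultimately show "x \<in> Y" unfolding Y_def by auto
        qed
        moreover have "vertex_disjoint (B - {e})" using vd_subset[OF B(2)] by blast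
        moreover have "card (B - {e}) = b - 1" using B(3,4) fB by simp
        ultimately have "B - {e} \<in> Ms Y (b - 1)" unfolding Ms_def by auto
        moreover have "B = insert e (B - {e})" using B(4) by auto
        ultimately show "B \<in> insert e ` Ms Y (b - 1)" by blast
      qed
      show "insert e ` Ms Y (b - 1) \<subseteq> S2"
      proof
        fix B assume "B \<in> insert e ` Ms Y (b - 1)"
        then obtain B' where B': "B' \<subseteq> Y" "vertex_disjoint B'" "card B' = b - 1" "B = insert e B'"
          unfolding Ms_def by auto
        have "B' \<subseteq> X" using B'(1) fY by blast
        hence fB': "finite B'" using fX by (rule finite_subset)
        have eB': "e \<notin> B'" using B'(1) fY eX by blast
        have "B \<subseteq> insert e X" using B'(1,4) fY by auto
        moreover have "vertex_disjoint B"
          unfolding B'(4) vertex_disjoint_def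
        proof (intro ballI impI)
          fix a c assume a: "a \<in> insert e B'" and c: "c \<in> insert e B'"
            and ne: "{fst a, snd a} \<inter> {fst c, snd c} \<noteq> {}"
          show "a = c"
          proof (cases "a = e \<or> c = e")
            case True
            thus ?thesis using a c ne B'(1) unfolding Y_def by blast
          next
            case False
            hence "a \<in> B'" "c \<in> B'" using a c by auto
            thus ?thesis using B'(2) ne unfolding vertex_disjoint_def by blast
          qed
        qed
        moreover have "card B = b" using B'(3,4) fB' eB' False by simp
        moreover have "e \<in> B" using B'(4) by simp
        ultimately show "B \<in> S2" unfolding S2_def Ms_def by auto
      qed
    qed
    have inj: "inj_on (insert e) (Ms Y (b - 1))"
    proof (rule inj_onI)
      fix P Q assume P: "P \<in> Ms Y (b - 1)" and Q: "Q \<in> Ms Y (b - 1)" and PQ: "insert e P = insert e Q"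
      have "e \<notin> P" "e \<notin> Q" using P Q fY eX unfolding Ms_def by blast+
      thus "P = Q" using PQ by (metis Diff_insert_absorb)
    qed
    show ?thesis unfolding eq using card_image[OF inj] False by simp
  qed
  thus ?thesis using c unfolding Y_def by simp
qed

definition PE :: "nat \<Rightarrow> nat \<Rightarrow> (nat \<times> nat) set" where
  "PE a m = {(i, i+1) | i. a \<le> i \<and> i + 1 < a + m}"

lemma finite_PE: "finite (PE a m)"
proof -
  have "PE a m \<subseteq> {0..a+m} \<times> {0..a+m}" unfolding PE_def by auto
  thus ?thesis by (rule finite_subset) simp
qed

lemma PE_small: "m \<le> 1 \<Longrightarrow> PE a m = {}"
  unfolding PE_def by auto

lemma binom_rec:
  "((Suc m - b) choose b) + (if b = 0 then 0 else (m - (b - 1)) choose (b - 1)) = (Suc (Suc m) - b) choose b"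
proof (cases b)
  case (Suc c)
  show ?thesis
  proof (cases "c \<le> m")
    case True
    hence "Suc (Suc m) - b = Suc (Suc m - b)" "Suc m - b = m - c" "m - (b - 1) = m - c" using Suc by auto
    thus ?thesis using Suc by (simp add: add.commute)
  next
    case False
    hence "Suc (Suc m) - b = 0" "Suc m - b = 0" "m - (b - 1) = 0" using Suc by auto
    thus ?thesis using Suc False by simp
  qed
qed simp

lemma card_PM: "card (Ms (PE a m) b) = (m - b) choose b"
proof -
  have "\<forall>b. card (Ms (PE a m) b) = (m - b) choose b \<and> card (Ms (PE a (Suc m)) b) = (Suc m - b) choose b"
  proof (induction m)
    case 0
    show ?case
    proof
      fix b
      show "card (Ms (PE a 0) b) = (0 - b) choose b \<and> card (Ms (PE a (Suc 0)) b) = (Suc 0 - b) choose b"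
        using PE_small[of 0 a] PE_small[of "Suc 0" a] card_Ms_empty[of b]
        by (cases b) auto
    qed
  next
    case (Suc m)
    show ?case
    proof
      fix b
      define e where "e = (a + m, a + m + 1)"
      have ins: "PE a (Suc (Suc m)) = insert e (PE a (Suc m))" unfolding PE_def e_def by auto
      have notin: "e \<notin> PE a (Suc m)" unfolding PE_def e_def by auto
      have Y: "{x\<in>PE a (Suc m). {fst x, snd x} \<inter> {fst e, snd e} = {}} = PE a m"
        unfolding PE_def e_def by auto
      have "card (Ms (PE a (Suc (Suc m))) b) = card (Ms (PE a (Suc m)) b) + (if b = 0 then 0 else card (Ms (PE a m) (b - 1)))"
        unfolding ins split_edge[OF finite_PE notin] Y by simp
      also have "\<dots> = ((Suc m - b) choose b) + (if b = 0 then 0 else (m - (b - 1)) choose (b - 1))"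
        using Suc.IH by presburger
      also have "\<dots> = (Suc (Suc m) - b) choose b" by (rule binom_rec)
      finally have "card (Ms (PE a (Suc (Suc m))) b) = (Suc (Suc m) - b) choose b" .
      thus "card (Ms (PE a (Suc m)) b) = (Suc m - b) choose b \<and>
            card (Ms (PE a (Suc (Suc m))) b) = (Suc (Suc m) - b) choose b" using Suc.IH by simp
    qed
  qed
  thus ?thesis by simp
qed

lemma card_CM:
  assumes n: "n \<ge> 3"
  shows "card (Ms (Ecirc n) b) = ((n - b) choose b) + (if b = 0 then 0 else ((n - 2) - (b - 1)) choose (b - 1))"
proof -
  define e where "e = (1::nat, n)"
  have ins: "Ecirc n = insert e (PE 1 n)" unfolding PE_def e_def Ecirc_def by auto
  have notin: "e \<notin> PE 1 n" unfolding PE_def e_def using n by auto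
  have Y: "{x\<in>PE 1 n. {fst x, snd x} \<inter> {fst e, snd e} = {}} = PE 2 (n - 2)"
    unfolding PE_def e_def using n by auto
  show ?thesis unfolding ins split_edge[OF finite_PE notin] Y card_PM by simp
qed



lemma f_k_zero: assumes "m < l" shows "f_k k m l = 0"
proof -
  have "num_isolated m A \<le> m" for A
  proof -
    have "card ({1..m} - verts A) \<le> card {1..m}" by (rule card_mono) auto
    thus ?thesis unfolding num_isolated_alt by simp
  qed
  hence "\<not> (k_noncrossing k m A \<and> num_isolated m A = l)" for A using assms
    by (metis not_le)
  hence "{A. k_noncrossing k m A \<and> num_isolated m A = l} = {}" by blast
  thus ?thesis unfolding f_k_def by (simp only: card.empty)
qed

lemma finite_kn: "finite {A. k_noncrossing k n A \<and> P A}"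
proof (rule finite_subset[of _ "Pow ({1..n} \<times> {1..n})"])
  show "{A. k_noncrossing k n A \<and> P A} \<subseteq> Pow ({1..n} \<times> {1..n})"
    unfolding k_noncrossing_def digraph_def by auto
qed simp

lemma main_full:
  assumes k: "(k::nat) \<ge> 2" and n: "n \<ge> 3"
  shows "int (S_circ k n l) = (\<Sum>b = 0..n div 2. coef n b * int (f_k k (n - 2 * b) l))"
proof -
  define U where "U = {A. k_noncrossing k n A \<and> num_isolated n A = l}"
  define E where "E = Ecirc n"
  have fU: "finite U" unfolding U_def by (rule finite_kn)
  have fE: "finite E" unfolding E_def by (rule finite_Ecirc)
  have n2: "n \<ge> 2" using n by simp
  have S: "S_circ k n l = card {A\<in>U. A \<inter> E = {}}"
  proof -
    have "{A. circular_rna k n A \<and> num_isolated n A = l} = {A\<in>U. A \<inter> E = {}}"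
      unfolding U_def E_def circular_rna_def Ecirc_def by auto
    thus ?thesis unfolding S_circ_def by simp
  qed
  have "int (card {A\<in>U. A \<inter> E = {}}) = (\<Sum>A\<in>U. (if A \<inter> E = {} then 1 else 0))"
    using fU by (simp add: sum.inter_filter[symmetric])
  also have "\<dots> = (\<Sum>A\<in>U. \<Sum>B\<in>Pow (A \<inter> E). (-1::int) ^ card B)"
  proof (rule sum.cong[OF refl])
    fix A assume "A \<in> U"
    have "finite (A \<inter> E)" using fE by simp
    thus "(if A \<inter> E = {} then 1 else 0) = (\<Sum>B\<in>Pow (A \<inter> E). (-1::int) ^ card B)"
      by (rule alt_pow[symmetric])
  qed
  also have "\<dots> = (\<Sum>A\<in>U. \<Sum>B\<in>Pow E. if B \<subseteq> A then (-1::int) ^ card B else 0)"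
  proof (rule sum.cong[OF refl])
    fix A assume "A \<in> U"
    have e1: "Pow (A \<inter> E) = {B \<in> Pow E. B \<subseteq> A}" by auto
    have e2: "(\<Sum>B\<in>Pow E. if B \<subseteq> A then (-1::int) ^ card B else 0) = (\<Sum>B\<in>{B \<in> Pow E. B \<subseteq> A}. (-1::int) ^ card B)"
      by (rule sym, rule sum.inter_filter) (simp add: fE)
    show "(\<Sum>B\<in>Pow (A \<inter> E). (-1::int) ^ card B) = (\<Sum>B\<in>Pow E. if B \<subseteq> A then (-1::int) ^ card B else 0)"
      by (simp only: e1 e2)
  qed
  also have "\<dots> = (\<Sum>B\<in>Pow E. \<Sum>A\<in>U. if B \<subseteq> A then (-1::int) ^ card B else 0)"
    by (rule sum.swap)
  also have "\<dots> = (\<Sum>B\<in>Pow E. (-1::int) ^ card B * int (card {A\<in>U. B \<subseteq> A}))"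
  proof (rule sum.cong[OF refl])
    fix B
    show "(\<Sum>A\<in>U. if B \<subseteq> A then (-1::int) ^ card B else 0) = (-1::int) ^ card B * int (card {A\<in>U. B \<subseteq> A})"
      using fU by (simp add: sum.inter_filter[symmetric])
  qed
  also have "\<dots> = (\<Sum>B\<in>Pow E. if vertex_disjoint B then (-1::int) ^ card B * int (f_k k (n - 2 * card B) l) else 0)"
  proof (rule sum.cong[OF refl])
    fix B assume B: "B \<in> Pow E"
    show "(-1::int) ^ card B * int (card {A\<in>U. B \<subseteq> A}) =
          (if vertex_disjoint B then (-1::int) ^ card B * int (f_k k (n - 2 * card B) l) else 0)"
    proof (cases "vertex_disjoint B")
      case True
      have "{A\<in>U. B \<subseteq> A} = {A. k_noncrossing k n A \<and> num_isolated n A = l \<and> B \<subseteq> A}"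
        unfolding U_def by auto
      with count_fixed[OF k n2 _ True, of l] B show ?thesis unfolding E_def using True by simp
    next
      case False
      have "{A\<in>U. B \<subseteq> A} = {}"
        using False vd_subset unfolding U_def k_noncrossing_def by blast
      thus ?thesis using False by (simp only: card.empty if_False)
    qed
  qed
  also have "\<dots> = (\<Sum>B\<in>{B\<in>Pow E. vertex_disjoint B}. (-1::int) ^ card B * int (f_k k (n - 2 * card B) l))"
    by (rule sym, rule sum.inter_filter) (simp add: fE)
  also have "\<dots> = (\<Sum>b\<in>{0..n div 2}. \<Sum>B\<in>{B\<in>{B\<in>Pow E. vertex_disjoint B}. card B = b}. (-1::int) ^ card B * int (f_k k (n - 2 * card B) l))"
  proof -
    have sub: "card ` {B\<in>Pow E. vertex_disjoint B} \<subseteq> {0..n div 2}"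
    proof
      fix x assume "x \<in> card ` {B\<in>Pow E. vertex_disjoint B}"
      then obtain B where B: "B \<subseteq> E" "vertex_disjoint B" "x = card B" by auto
      have dgB: "digraph n B" using B(1) Ecirc_digraph[OF n2] unfolding E_def digraph_def by blast
      have fB: "finite B" using B(1) fE finite_subset by auto
      have "verts B \<subseteq> {1..n}" using dgB unfolding verts_def digraph_iff by auto
      hence "card (verts B) \<le> n" using card_mono[of "{1..n}" "verts B"] by simp
      hence "2 * card B \<le> n" using card_verts[OF dgB B(2) fB] by simp
      thus "x \<in> {0..n div 2}" using B(3) by auto
    qed
    have fS: "finite {B\<in>Pow E. vertex_disjoint B}" using fE by simp
    show ?thesis by (rule sum.group[OF fS _ sub, symmetric]) simp
  qed
  also have "\<dots> = (\<Sum>b\<in>{0..n div 2}. coef n b * int (f_k k (n - 2 * b) l))"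
  proof (rule sum.cong[OF refl])
    fix b
    have eq: "{B\<in>{B\<in>Pow E. vertex_disjoint B}. card B = b} = Ms (Ecirc n) b"
      unfolding Ms_def E_def by auto
    have "(\<Sum>B\<in>{B\<in>{B\<in>Pow E. vertex_disjoint B}. card B = b}. (-1::int) ^ card B * int (f_k k (n - 2 * card B) l))
        = (\<Sum>B\<in>Ms (Ecirc n) b. (-1::int) ^ b * int (f_k k (n - 2 * b) l))"
      unfolding eq by (intro sum.cong refl) (simp add: Ms_def)
    also have "\<dots> = (-1::int) ^ b * int (f_k k (n - 2 * b) l) * int (card (Ms (Ecirc n) b))" by simp
    also have "\<dots> = coef n b * int (f_k k (n - 2 * b) l)"
      unfolding card_CM[OF n] coef_def by (simp add: algebra_simps)
    finally show "(\<Sum>B\<in>{B\<in>{B\<in>Pow E. vertex_disjoint B}. card B = b}. (-1::int) ^ card B * int (f_k k (n - 2 * card B) l))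
        = coef n b * int (f_k k (n - 2 * b) l)" .
  qed
  finally show ?thesis using S by simp
qed

theorem theorem3p5:
  fixes k n l :: nat
  assumes "k \<ge> 2" and "n \<ge> 3"
  shows "int (S_circ k n l) =
           (\<Sum>b = 0..(n - l) div 2. coef n b * int (f_k k (n - 2 * b) l))
         \<and> int (S_circ_total k n) =
           (\<Sum>b = 0..n div 2. coef n b * (\<Sum>l' = 0..n - 2 * b. int (f_k k (n - 2 * b) l')))"
proof
  have red: "(\<Sum>b = 0..n div 2. coef n b * int (f_k k (n - 2 * b) l')) =
             (\<Sum>b = 0..(n - l') div 2. coef n b * int (f_k k (n - 2 * b) l'))" for l'
  proof (rule sum.mono_neutral_right)
    show "finite {0..n div 2}" by simp
    show "{0..(n - l') div 2} \<subseteq> {0..n div 2}" by auto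
    show "\<forall>b\<in>{0..n div 2} - {0..(n - l') div 2}. coef n b * int (f_k k (n - 2 * b) l') = 0"
    proof
      fix b assume "b \<in> {0..n div 2} - {0..(n - l') div 2}"
      hence "n - 2 * b < l'" by auto
      thus "coef n b * int (f_k k (n - 2 * b) l') = 0" using f_k_zero by simp
    qed
  qed
  show "int (S_circ k n l) = (\<Sum>b = 0..(n - l) div 2. coef n b * int (f_k k (n - 2 * b) l))"
    using main_full[OF assms] red by simp
  have "int (S_circ_total k n) = (\<Sum>l'\<le>n. int (S_circ k n l'))"
    unfolding S_circ_total_def by simp
  also have "\<dots> = (\<Sum>l'\<le>n. \<Sum>b = 0..n div 2. coef n b * int (f_k k (n - 2 * b) l'))"
    using main_full[OF assms] by simp
  also have "\<dots> = (\<Sum>b = 0..n div 2. coef n b * (\<Sum>l'\<le>n. int (f_k k (n - 2 * b) l')))"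
    by (subst sum.swap) (simp add: sum_distrib_left)
  also have "\<dots> = (\<Sum>b = 0..n div 2. coef n b * (\<Sum>l' = 0..n - 2 * b. int (f_k k (n - 2 * b) l')))"
  proof (rule sum.cong[OF refl])
    fix b
    have "(\<Sum>l'\<le>n. int (f_k k (n - 2 * b) l')) = (\<Sum>l' = 0..n - 2 * b. int (f_k k (n - 2 * b) l'))"
    proof (rule sum.mono_neutral_right)
      show "finite {..n}" by simp
      show "{0..n - 2 * b} \<subseteq> {..n}" by auto
      show "\<forall>i\<in>{..n} - {0..n - 2 * b}. int (f_k k (n - 2 * b) i) = 0"
        using f_k_zero by auto
    qed
    thus "coef n b * (\<Sum>l'\<le>n. int (f_k k (n - 2 * b) l')) = coef n b * (\<Sum>l' = 0..n - 2 * b. int (f_k k (n - 2 * b) l'))"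
      by simp
  qed
  finally show "int (S_circ_total k n) =
           (\<Sum>b = 0..n div 2. coef n b * (\<Sum>l' = 0..n - 2 * b. int (f_k k (n - 2 * b) l')))" .
qed

end
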